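(* Let $Q$ be a complete quiver with at least one frozen vertex, and let $\mathbf M=m_1m_2\cdots$ be an infinite mutation sequence which is reduced, weakly balanced and cycle-preserving, and such that $m_1$ is not the apex of a vortex in $Q$. Then $Q$ is eventually sign-coherent on $\mathbf M$: there is $T$ such that $Q^{(j)}_{\mathbf M}$ is sign-coherent for all $j>T$.
   Context: A quiver is a finite directed multigraph with no loops and no oriented 2-cycles, whose vertex set is partitioned into mutable and frozen vertices; arrows between two frozen vertices are ignored. $Q|_S$ is the induced subquiver on $S$. Mutation $\mu_j$ at mutable $j$: for each path $i\to j\to k$ with $a$ arrows $i\to j$ and $b$ arrows $j\to k$ add $ab$ arrows $i\to k$, reverse all arrows at $j$, cancel 2-cycles. A mutation sequence $\mathbf M=m_1m_2\cdots$ is a sequence of mutable vertices; $Q^{(0)}_{\mathbf M}=Q$, $Q^{(i)}_{\mathbf M}=\mu_{m_i}(Q^{(i-1)}_{\mathbf M})$. It is reduced if $m_i\neq m_{i+1}$ for all $i$, and weakly balanced if every mutable vertex occurs infinitely often. Complete: at least one arrow between every pair of vertices at least one of which is mutable. A 3-vertex (sub)quiver is an oriented 3-cycle if it has at most one frozen vertex and its underlying directed graph is not acyclic. A mutable vertex $j$ is cycle-preserving for $Q$ if whenever $Q|_{\{i,j,k\}}$ is an oriented 3-cycle containing $j$, so is $\mu_j(Q)|_{\{i,j,k\}}$; $\mathbf M$ is cycle-preserving if $m_\ell$ is cycle-preserving for $Q^{(\ell-1)}_{\mathbf M}$ for every $\ell\ge1$. A vortex is a quiver on four vertices, at least three mutable,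 in which one vertex (the apex) is a source or sink and the other three support an oriented cycle; $j$ is the apex of a vortex in $Q$ if it is the apex of some 4-vertex induced subquiver that is a vortex. A mutable vertex adjacent to at least one frozen vertex is red (resp. green) if all arrows between it and frozen vertices point towards (resp. away from) it; a quiver is sign-coherent if every mutable vertex is red or green. *)

theory Defs
  imports Main
begin

text \<open>A quiver on a finite vertex set V with mutable vertices M (frozen vertices V - M)
is encoded by its exchange matrix B: B i k = (number of arrows i to k) - (number of arrows k to i).
Since there are no loops and no oriented 2-cycles this determines the quiver.
Entries between two frozen vertices are ignored by every notion below.\<close>

definition quiver :: "'v set \<Rightarrow> 'v set \<Rightarrow> ('v \<Rightarrow> 'v \<Rightarrow> int) \<Rightarrow> bool" where
  "quiver V M B \<longleftrightarrow> finite V \<and> M \<subseteq> V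
     \<and> (\<forall>i k. B i k = - B k i)
     \<and> (\<forall>i k. i \<notin> V \<or> k \<notin> V \<longrightarrow> B i k = 0)"

definition mutate :: "'v \<Rightarrow> ('v \<Rightarrow> 'v \<Rightarrow> int) \<Rightarrow> ('v \<Rightarrow> 'v \<Rightarrow> int)" where
  "mutate j B = (\<lambda>i k. if i = j \<or> k = j then - B i k
      else B i k + max (B i j) 0 * max (B j k) 0 - max (- B i j) 0 * max (- B j k) 0)"

text \<open>Q^(n) along the mutation sequence m, where m l is the (l+1)-st mutation m_{l+1}.\<close>
primrec mutseq :: "('v \<Rightarrow> 'v \<Rightarrow> int) \<Rightarrow> (nat \<Rightarrow> 'v) \<Rightarrow> nat \<Rightarrow> ('v \<Rightarrow> 'v \<Rightarrow> int)" where
  "mutseq B m 0 = B"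
| "mutseq B m (Suc n) = mutate (m n) (mutseq B m n)"

definition complete_quiver :: "'v set \<Rightarrow> 'v set \<Rightarrow> ('v \<Rightarrow> 'v \<Rightarrow> int) \<Rightarrow> bool" where
  "complete_quiver V M B \<longleftrightarrow>
     (\<forall>i\<in>V. \<forall>k\<in>V. i \<noteq> k \<and> (i \<in> M \<or> k \<in> M) \<longrightarrow> B i k \<noteq> 0)"

definition cyclic3 :: "('v \<Rightarrow> 'v \<Rightarrow> int) \<Rightarrow> 'v \<Rightarrow> 'v \<Rightarrow> 'v \<Rightarrow> bool" where
  "cyclic3 B i j k \<longleftrightarrow>
     (B i j > 0 \<and> B j k > 0 \<and> B k i > 0) \<or> (B j i > 0 \<and> B k j > 0 \<and> B i k > 0)"

definition oriented_3cycle :: "'v set \<Rightarrow> 'v set \<Rightarrow> ('v \<Rightarrow> 'v \<Rightarrow> int) \<Rightarrow> 'v \<Rightarrow> 'v \<Rightarrow> 'v \<Rightarrow> bool" where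
  "oriented_3cycle V M B i j k \<longleftrightarrow>
     i \<in> V \<and> j \<in> V \<and> k \<in> V \<and> distinct [i, j, k]
     \<and> card ({i, j, k} - M) \<le> 1 \<and> cyclic3 B i j k"

definition cycle_preserving :: "'v set \<Rightarrow> 'v set \<Rightarrow> ('v \<Rightarrow> 'v \<Rightarrow> int) \<Rightarrow> 'v \<Rightarrow> bool" where
  "cycle_preserving V M B j \<longleftrightarrow> j \<in> M \<and>
     (\<forall>i k. oriented_3cycle V M B i j k \<longrightarrow> oriented_3cycle V M (mutate j B) i j k)"

definition vortex_apex :: "'v set \<Rightarrow> 'v set \<Rightarrow> ('v \<Rightarrow> 'v \<Rightarrow> int) \<Rightarrow> 'v \<Rightarrow> bool" where
  "vortex_apex V M B j \<longleftrightarrow> (\<exists>a b c. j \<in> V \<and> a \<in> V \<and> b \<in> V \<and> c \<in> V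
     \<and> distinct [j, a, b, c] \<and> card ({j, a, b, c} \<inter> M) \<ge> 3
     \<and> ((\<forall>x\<in>{a, b, c}. B x j \<le> 0) \<or> (\<forall>x\<in>{a, b, c}. B j x \<le> 0))
     \<and> cyclic3 B a b c)"

definition red :: "'v set \<Rightarrow> 'v set \<Rightarrow> ('v \<Rightarrow> 'v \<Rightarrow> int) \<Rightarrow> 'v \<Rightarrow> bool" where
  "red V M B v \<longleftrightarrow> v \<in> M \<and> (\<exists>f\<in>V - M. B v f \<noteq> 0) \<and> (\<forall>f\<in>V - M. B f v \<ge> 0)"

definition green :: "'v set \<Rightarrow> 'v set \<Rightarrow> ('v \<Rightarrow> 'v \<Rightarrow> int) \<Rightarrow> 'v \<Rightarrow> bool" where
  "green V M B v \<longleftrightarrow> v \<in> M \<and> (\<exists>f\<in>V - M. B v f \<noteq> 0) \<and> (\<forall>f\<in>V - M. B v f \<ge> 0)"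

definition sign_coherent :: "'v set \<Rightarrow> 'v set \<Rightarrow> ('v \<Rightarrow> 'v \<Rightarrow> int) \<Rightarrow> bool" where
  "sign_coherent V M B \<longleftrightarrow> (\<forall>v\<in>M. red V M B v \<or> green V M B v)"

end

theory Submission
  imports Defs
begin

definition mr :: "'v \<Rightarrow> ('v \<Rightarrow> 'v \<Rightarrow> bool) \<Rightarrow> 'v \<Rightarrow> 'v \<Rightarrow> bool" where
  "mr k A u w = (if u = k \<or> w = k then A w u else (A u k \<and> A k w) \<or> (A u w \<and> \<not>(A w k \<and> A k u)))"

definition rel :: "'v set \<Rightarrow> 'v set \<Rightarrow> 'v \<Rightarrow> 'v \<Rightarrow> bool" where
  "rel V M u w \<longleftrightarrow> u \<in> V \<and> w \<in> V \<and> u \<noteq> w \<and> (u \<in> M \<or> w \<in> M)"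

definition tot :: "'v set \<Rightarrow> 'v set \<Rightarrow> ('v \<Rightarrow> 'v \<Rightarrow> bool) \<Rightarrow> bool" where
  "tot V M A \<longleftrightarrow> (\<forall>u w. rel V M u w \<longrightarrow> (A u w \<longleftrightarrow> \<not> A w u))"

definition fewfr :: "'v set \<Rightarrow> 'v \<Rightarrow> 'v \<Rightarrow> 'v \<Rightarrow> bool" where
  "fewfr M a b c \<longleftrightarrow> (a \<in> M \<or> b \<in> M) \<and> (b \<in> M \<or> c \<in> M) \<and> (a \<in> M \<or> c \<in> M)"

definition P2 :: "'v set \<Rightarrow> 'v set \<Rightarrow> ('v \<Rightarrow> 'v \<Rightarrow> bool) \<Rightarrow> 'v \<Rightarrow> bool" where
  "P2 V M A r \<longleftrightarrow> (\<forall>u w. rel V M u w \<and> u \<noteq> r \<and> w \<noteq> r \<and> A r u \<and> A w r \<longrightarrow> A u w)"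

definition P3 :: "'v set \<Rightarrow> 'v set \<Rightarrow> ('v \<Rightarrow> 'v \<Rightarrow> bool) \<Rightarrow> 'v \<Rightarrow> bool" where
  "P3 V M A r \<longleftrightarrow> (\<forall>a b c. a \<in> V \<and> b \<in> V \<and> c \<in> V \<and> distinct [a,b,c] \<and> a \<noteq> r \<and> b \<noteq> r \<and> c \<noteq> r
      \<and> fewfr M a b c \<longrightarrow> \<not>(A a b \<and> A b c \<and> A c a))"

definition agree :: "'v set \<Rightarrow> 'v set \<Rightarrow> 'v \<Rightarrow> ('v \<Rightarrow> 'v \<Rightarrow> bool) \<Rightarrow> ('v \<Rightarrow> 'v \<Rightarrow> bool) \<Rightarrow> bool" where
  "agree V M k A A' \<longleftrightarrow> (\<forall>u w. rel V M u w \<longrightarrow> (A' u w \<longleftrightarrow> mr k A u w))"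

lemma P3_core_out:
  fixes A :: "'v \<Rightarrow> 'v \<Rightarrow> bool"
  assumes d: "distinct [a,b,c,k,r]"
  and T: "\<And>x y. x \<in> {a,b,c,k,r} \<Longrightarrow> y \<in> {a,b,c,k,r} \<Longrightarrow> x \<noteq> y \<Longrightarrow> A x y = (\<not> A y x)"
  and Q2: "\<And>x y. x \<in> {a,b,c,k} \<Longrightarrow> y \<in> {a,b,c,k} \<Longrightarrow> x \<noteq> y \<Longrightarrow> A r x \<Longrightarrow> A y r \<Longrightarrow> A x y"
  and Q3: "\<And>x y z. x \<in> {a,b,c,k} \<Longrightarrow> y \<in> {a,b,c,k} \<Longrightarrow> z \<in> {a,b,c,k} \<Longrightarrow> distinct [x,y,z] \<Longrightarrow> \<not>(A x y \<and> A y z \<and> A z x)"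

  shows "\<not>(mr k A a b \<and> mr k A b c \<and> mr k A c a)"
proof -
  have [simp]: "A b a = (\<not> A a b)" using T[of b a] d by (auto simp: doubleton_eq_iff)
  have [simp]: "A c a = (\<not> A a c)" using T[of c a] d by (auto simp: doubleton_eq_iff)
  have [simp]: "A k a = (\<not> A a k)" using T[of k a] d by (auto simp: doubleton_eq_iff)
  have [simp]: "A r a = (\<not> A a r)" using T[of r a] d by (auto simp: doubleton_eq_iff)
  have [simp]: "A c b = (\<not> A b c)" using T[of c b] d by (auto simp: doubleton_eq_iff)
  have [simp]: "A k b = (\<not> A b k)" using T[of k b] d by (auto simp: doubleton_eq_iff)
  have [simp]: "A r b = (\<not> A b r)" using T[of r b] d by (auto simp: doubleton_eq_iff)
  have [simp]: "A k c = (\<not> A c k)" using T[of k c] d by (auto simp: doubleton_eq_iff)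
  have [simp]: "A r c = (\<not> A c r)" using T[of r c] d by (auto simp: doubleton_eq_iff)
  have [simp]: "A r k = (\<not> A k r)" using T[of r k] d by (auto simp: doubleton_eq_iff)
  have q0: "A r a \<Longrightarrow> A b r \<Longrightarrow> A a b" using Q2[of a b] d by (auto simp: doubleton_eq_iff)
  have q1: "A r a \<Longrightarrow> A c r \<Longrightarrow> A a c" using Q2[of a c] d by (auto simp: doubleton_eq_iff)
  have q2: "A r a \<Longrightarrow> A k r \<Longrightarrow> A a k" using Q2[of a k] d by (auto simp: doubleton_eq_iff)
  have q3: "A r b \<Longrightarrow> A a r \<Longrightarrow> A b a" using Q2[of b a] d by (auto simp: doubleton_eq_iff)
  have q4: "A r b \<Longrightarrow> A c r \<Longrightarrow> A b c" using Q2[of b c] d by (auto simp: doubleton_eq_iff)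
  have q5: "A r b \<Longrightarrow> A k r \<Longrightarrow> A b k" using Q2[of b k] d by (auto simp: doubleton_eq_iff)
  have q6: "A r c \<Longrightarrow> A a r \<Longrightarrow> A c a" using Q2[of c a] d by (auto simp: doubleton_eq_iff)
  have q7: "A r c \<Longrightarrow> A b r \<Longrightarrow> A c b" using Q2[of c b] d by (auto simp: doubleton_eq_iff)
  have q8: "A r c \<Longrightarrow> A k r \<Longrightarrow> A c k" using Q2[of c k] d by (auto simp: doubleton_eq_iff)
  have q9: "A r k \<Longrightarrow> A a r \<Longrightarrow> A k a" using Q2[of k a] d by (auto simp: doubleton_eq_iff)
  have q10: "A r k \<Longrightarrow> A b r \<Longrightarrow> A k b" using Q2[of k b] d by (auto simp: doubleton_eq_iff)
  have q11: "A r k \<Longrightarrow> A c r \<Longrightarrow> A k c" using Q2[of k c] d by (auto simp: doubleton_eq_iff)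
  have q12: "\<not>(A a b \<and> A b c \<and> A c a)" using Q3[of a b c] d by (auto simp: doubleton_eq_iff)
  have q13: "\<not>(A a c \<and> A c b \<and> A b a)" using Q3[of a c b] d by (auto simp: doubleton_eq_iff)
  have q14: "\<not>(A a b \<and> A b k \<and> A k a)" using Q3[of a b k] d by (auto simp: doubleton_eq_iff)
  have q15: "\<not>(A a k \<and> A k b \<and> A b a)" using Q3[of a k b] d by (auto simp: doubleton_eq_iff)
  have q16: "\<not>(A a c \<and> A c k \<and> A k a)" using Q3[of a c k] d by (auto simp: doubleton_eq_iff)
  have q17: "\<not>(A a k \<and> A k c \<and> A c a)" using Q3[of a k c] d by (auto simp: doubleton_eq_iff)
  have q18: "\<not>(A b c \<and> A c k \<and> A k b)" using Q3[of b c k] d by (auto simp: doubleton_eq_iff)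
  have q19: "\<not>(A b k \<and> A k c \<and> A c b)" using Q3[of b k c] d by (auto simp: doubleton_eq_iff)
  show ?thesis using q0 q1 q2 q3 q4 q5 q6 q7 q8 q9 q10 q11 q12 q13 q14 q15 q16 q17 q18 q19 d unfolding mr_def by (simp; blast)
qed
lemma P3_core_in:
  fixes A :: "'v \<Rightarrow> 'v \<Rightarrow> bool"
  assumes d: "distinct [a,b,c,k]"
  and T: "\<And>x y. x \<in> {a,b,c,k} \<Longrightarrow> y \<in> {a,b,c,k} \<Longrightarrow> x \<noteq> y \<Longrightarrow> A x y = (\<not> A y x)"
  and Q2: "\<And>x y. x \<in> {b,c,k} \<Longrightarrow> y \<in> {b,c,k} \<Longrightarrow> x \<noteq> y \<Longrightarrow> A a x \<Longrightarrow> A y a \<Longrightarrow> A x y"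
  and Q3: "\<And>x y z. x \<in> {b,c,k} \<Longrightarrow> y \<in> {b,c,k} \<Longrightarrow> z \<in> {b,c,k} \<Longrightarrow> distinct [x,y,z] \<Longrightarrow> \<not>(A x y \<and> A y z \<and> A z x)"

  shows "\<not>(mr k A a b \<and> mr k A b c \<and> mr k A c a)"
proof -
  have [simp]: "A b a = (\<not> A a b)" using T[of b a] d by (auto simp: doubleton_eq_iff)
  have [simp]: "A c a = (\<not> A a c)" using T[of c a] d by (auto simp: doubleton_eq_iff)
  have [simp]: "A k a = (\<not> A a k)" using T[of k a] d by (auto simp: doubleton_eq_iff)
  have [simp]: "A c b = (\<not> A b c)" using T[of c b] d by (auto simp: doubleton_eq_iff)
  have [simp]: "A k b = (\<not> A b k)" using T[of k b] d by (auto simp: doubleton_eq_iff)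
  have [simp]: "A k c = (\<not> A c k)" using T[of k c] d by (auto simp: doubleton_eq_iff)
  have q0: "A a b \<Longrightarrow> A c a \<Longrightarrow> A b c" using Q2[of b c] d by (auto simp: doubleton_eq_iff)
  have q1: "A a b \<Longrightarrow> A k a \<Longrightarrow> A b k" using Q2[of b k] d by (auto simp: doubleton_eq_iff)
  have q2: "A a c \<Longrightarrow> A b a \<Longrightarrow> A c b" using Q2[of c b] d by (auto simp: doubleton_eq_iff)
  have q3: "A a c \<Longrightarrow> A k a \<Longrightarrow> A c k" using Q2[of c k] d by (auto simp: doubleton_eq_iff)
  have q4: "A a k \<Longrightarrow> A b a \<Longrightarrow> A k b" using Q2[of k b] d by (auto simp: doubleton_eq_iff)
  have q5: "A a k \<Longrightarrow> A c a \<Longrightarrow> A k c" using Q2[of k c] d by (auto simp: doubleton_eq_iff)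
  have q6: "\<not>(A b c \<and> A c k \<and> A k b)" using Q3[of b c k] d by (auto simp: doubleton_eq_iff)
  have q7: "\<not>(A b k \<and> A k c \<and> A c b)" using Q3[of b k c] d by (auto simp: doubleton_eq_iff)
  show ?thesis using q0 q1 q2 q3 q4 q5 q6 q7 d unfolding mr_def by (simp; blast)
qed
lemma Bet_core_v:
  fixes A :: "'v \<Rightarrow> 'v \<Rightarrow> bool"
  assumes d: "distinct [f,g,k,r,v]"
  and T: "\<And>x y. x \<in> {f,g,k,r,v} \<Longrightarrow> y \<in> {f,g,k,r,v} \<Longrightarrow> x \<noteq> y \<Longrightarrow> {x,y} \<noteq> {f,g} \<Longrightarrow> A x y = (\<not> A y x)"
  and Q2: "\<And>x y. x \<in> {f,g,k,v} \<Longrightarrow> y \<in> {f,g,k,v} \<Longrightarrow> x \<noteq> y \<Longrightarrow> {x,y} \<noteq> {f,g} \<Longrightarrow> A r x \<Longrightarrow> A y r \<Longrightarrow> A x y"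
  and Q3: "\<And>x y z. x \<in> {f,g,k,v} \<Longrightarrow> y \<in> {f,g,k,v} \<Longrightarrow> z \<in> {f,g,k,v} \<Longrightarrow> distinct [x,y,z] \<Longrightarrow> \<not>({f,g} \<subseteq> {x,y,z}) \<Longrightarrow> \<not>(A x y \<and> A y z \<and> A z x)"

  shows "mr k A f v \<and> mr k A v g \<longrightarrow> v \<noteq> r \<and> ((A f v \<and> A v g) \<or> (A g v \<and> A v f))"
proof -
  have [simp]: "A k f = (\<not> A f k)" using T[of k f] d by (auto simp: doubleton_eq_iff)
  have [simp]: "A r f = (\<not> A f r)" using T[of r f] d by (auto simp: doubleton_eq_iff)
  have [simp]: "A v f = (\<not> A f v)" using T[of v f] d by (auto simp: doubleton_eq_iff)
  have [simp]: "A k g = (\<not> A g k)" using T[of k g] d by (auto simp: doubleton_eq_iff)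
  have [simp]: "A r g = (\<not> A g r)" using T[of r g] d by (auto simp: doubleton_eq_iff)
  have [simp]: "A v g = (\<not> A g v)" using T[of v g] d by (auto simp: doubleton_eq_iff)
  have [simp]: "A r k = (\<not> A k r)" using T[of r k] d by (auto simp: doubleton_eq_iff)
  have [simp]: "A v k = (\<not> A k v)" using T[of v k] d by (auto simp: doubleton_eq_iff)
  have [simp]: "A v r = (\<not> A r v)" using T[of v r] d by (auto simp: doubleton_eq_iff)
  have q0: "A r f \<Longrightarrow> A k r \<Longrightarrow> A f k" using Q2[of f k] d by (auto simp: doubleton_eq_iff)
  have q1: "A r f \<Longrightarrow> A v r \<Longrightarrow> A f v" using Q2[of f v] d by (auto simp: doubleton_eq_iff)
  have q2: "A r g \<Longrightarrow> A k r \<Longrightarrow> A g k" using Q2[of g k] d by (auto simp: doubleton_eq_iff)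
  have q3: "A r g \<Longrightarrow> A v r \<Longrightarrow> A g v" using Q2[of g v] d by (auto simp: doubleton_eq_iff)
  have q4: "A r k \<Longrightarrow> A f r \<Longrightarrow> A k f" using Q2[of k f] d by (auto simp: doubleton_eq_iff)
  have q5: "A r k \<Longrightarrow> A g r \<Longrightarrow> A k g" using Q2[of k g] d by (auto simp: doubleton_eq_iff)
  have q6: "A r k \<Longrightarrow> A v r \<Longrightarrow> A k v" using Q2[of k v] d by (auto simp: doubleton_eq_iff)
  have q7: "A r v \<Longrightarrow> A f r \<Longrightarrow> A v f" using Q2[of v f] d by (auto simp: doubleton_eq_iff)
  have q8: "A r v \<Longrightarrow> A g r \<Longrightarrow> A v g" using Q2[of v g] d by (auto simp: doubleton_eq_iff)
  have q9: "A r v \<Longrightarrow> A k r \<Longrightarrow> A v k" using Q2[of v k] d by (auto simp: doubleton_eq_iff)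
  have q10: "\<not>(A f k \<and> A k v \<and> A v f)" using Q3[of f k v] d by (auto simp: doubleton_eq_iff)
  have q11: "\<not>(A f v \<and> A v k \<and> A k f)" using Q3[of f v k] d by (auto simp: doubleton_eq_iff)
  have q12: "\<not>(A g k \<and> A k v \<and> A v g)" using Q3[of g k v] d by (auto simp: doubleton_eq_iff)
  have q13: "\<not>(A g v \<and> A v k \<and> A k g)" using Q3[of g v k] d by (auto simp: doubleton_eq_iff)
  show ?thesis using q0 q1 q2 q3 q4 q5 q6 q7 q8 q9 q10 q11 q12 q13 d unfolding mr_def by (simp; blast)
qed
lemma Bet_core_k:
  fixes A :: "'v \<Rightarrow> 'v \<Rightarrow> bool"
  assumes d: "distinct [f,g,k,r]"
  and T: "\<And>x y. x \<in> {f,g,k,r} \<Longrightarrow> y \<in> {f,g,k,r} \<Longrightarrow> x \<noteq> y \<Longrightarrow> {x,y} \<noteq> {f,g} \<Longrightarrow> A x y = (\<not> A y x)"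
  and Q2: "\<And>x y. x \<in> {f,g,k} \<Longrightarrow> y \<in> {f,g,k} \<Longrightarrow> x \<noteq> y \<Longrightarrow> {x,y} \<noteq> {f,g} \<Longrightarrow> A r x \<Longrightarrow> A y r \<Longrightarrow> A x y"
  and Q3: "\<And>x y z. x \<in> {f,g,k} \<Longrightarrow> y \<in> {f,g,k} \<Longrightarrow> z \<in> {f,g,k} \<Longrightarrow> distinct [x,y,z] \<Longrightarrow> \<not>({f,g} \<subseteq> {x,y,z}) \<Longrightarrow> \<not>(A x y \<and> A y z \<and> A z x)"

  shows "mr k A f k \<and> mr k A k g \<longrightarrow> k \<noteq> r \<and> ((A f k \<and> A k g) \<or> (A g k \<and> A k f))"
proof -
  have [simp]: "A k f = (\<not> A f k)" using T[of k f] d by (auto simp: doubleton_eq_iff)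
  have [simp]: "A r f = (\<not> A f r)" using T[of r f] d by (auto simp: doubleton_eq_iff)
  have [simp]: "A k g = (\<not> A g k)" using T[of k g] d by (auto simp: doubleton_eq_iff)
  have [simp]: "A r g = (\<not> A g r)" using T[of r g] d by (auto simp: doubleton_eq_iff)
  have [simp]: "A r k = (\<not> A k r)" using T[of r k] d by (auto simp: doubleton_eq_iff)
  have q0: "A r f \<Longrightarrow> A k r \<Longrightarrow> A f k" using Q2[of f k] d by (auto simp: doubleton_eq_iff)
  have q1: "A r g \<Longrightarrow> A k r \<Longrightarrow> A g k" using Q2[of g k] d by (auto simp: doubleton_eq_iff)
  have q2: "A r k \<Longrightarrow> A f r \<Longrightarrow> A k f" using Q2[of k f] d by (auto simp: doubleton_eq_iff)
  have q3: "A r k \<Longrightarrow> A g r \<Longrightarrow> A k g" using Q2[of k g] d by (auto simp: doubleton_eq_iff)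
  show ?thesis using q0 q1 q2 q3 d unfolding mr_def by (simp; blast)
qed
lemma Bet_core_r:
  fixes A :: "'v \<Rightarrow> 'v \<Rightarrow> bool"
  assumes d: "distinct [f,g,k,r]"
  and T: "\<And>x y. x \<in> {f,g,k,r} \<Longrightarrow> y \<in> {f,g,k,r} \<Longrightarrow> x \<noteq> y \<Longrightarrow> {x,y} \<noteq> {f,g} \<Longrightarrow> A x y = (\<not> A y x)"
  and Q2: "\<And>x y. x \<in> {f,g,k} \<Longrightarrow> y \<in> {f,g,k} \<Longrightarrow> x \<noteq> y \<Longrightarrow> {x,y} \<noteq> {f,g} \<Longrightarrow> A r x \<Longrightarrow> A y r \<Longrightarrow> A x y"
  and Q3: "\<And>x y z. x \<in> {f,g,k} \<Longrightarrow> y \<in> {f,g,k} \<Longrightarrow> z \<in> {f,g,k} \<Longrightarrow> distinct [x,y,z] \<Longrightarrow> \<not>({f,g} \<subseteq> {x,y,z}) \<Longrightarrow> \<not>(A x y \<and> A y z \<and> A z x)"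

  shows "mr k A f r \<and> mr k A r g \<longrightarrow> r \<noteq> r \<and> ((A f r \<and> A r g) \<or> (A g r \<and> A r f))"
proof -
  have [simp]: "A k f = (\<not> A f k)" using T[of k f] d by (auto simp: doubleton_eq_iff)
  have [simp]: "A r f = (\<not> A f r)" using T[of r f] d by (auto simp: doubleton_eq_iff)
  have [simp]: "A k g = (\<not> A g k)" using T[of k g] d by (auto simp: doubleton_eq_iff)
  have [simp]: "A r g = (\<not> A g r)" using T[of r g] d by (auto simp: doubleton_eq_iff)
  have [simp]: "A r k = (\<not> A k r)" using T[of r k] d by (auto simp: doubleton_eq_iff)
  have q0: "A r f \<Longrightarrow> A k r \<Longrightarrow> A f k" using Q2[of f k] d by (auto simp: doubleton_eq_iff)
  have q1: "A r g \<Longrightarrow> A k r \<Longrightarrow> A g k" using Q2[of g k] d by (auto simp: doubleton_eq_iff)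
  have q2: "A r k \<Longrightarrow> A f r \<Longrightarrow> A k f" using Q2[of k f] d by (auto simp: doubleton_eq_iff)
  have q3: "A r k \<Longrightarrow> A g r \<Longrightarrow> A k g" using Q2[of k g] d by (auto simp: doubleton_eq_iff)
  show ?thesis using q0 q1 q2 q3 d unfolding mr_def by (simp; blast)
qed
lemma Init_core:
  fixes A :: "'v \<Rightarrow> 'v \<Rightarrow> bool"
  assumes d: "distinct [a,b,c,k]"
  and T: "\<And>x y. x \<in> {a,b,c,k} \<Longrightarrow> y \<in> {a,b,c,k} \<Longrightarrow> x \<noteq> y \<Longrightarrow> A x y = (\<not> A y x)"
  and NV: "\<not>(((\<not>A a k \<and> \<not>A b k \<and> \<not>A c k) \<or> (\<not>A k a \<and> \<not>A k b \<and> \<not>A k c)) \<and> (A a b \<and> A b c \<and> A c a))"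
  shows "\<not>(mr k A a b \<and> mr k A b c \<and> mr k A c a)"
proof -
  have [simp]: "A b a = (\<not> A a b)" using T[of b a] d by (auto simp: doubleton_eq_iff)
  have [simp]: "A c a = (\<not> A a c)" using T[of c a] d by (auto simp: doubleton_eq_iff)
  have [simp]: "A k a = (\<not> A a k)" using T[of k a] d by (auto simp: doubleton_eq_iff)
  have [simp]: "A c b = (\<not> A b c)" using T[of c b] d by (auto simp: doubleton_eq_iff)
  have [simp]: "A k b = (\<not> A b k)" using T[of k b] d by (auto simp: doubleton_eq_iff)
  have [simp]: "A k c = (\<not> A c k)" using T[of k c] d by (auto simp: doubleton_eq_iff)
  show ?thesis using d NV unfolding mr_def by (simp; blast)
qed
lemma rel_sym: "rel V M u w \<Longrightarrow> rel V M w u"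
  by (auto simp: rel_def)

lemma L_tot:
  assumes t: "tot V M A" and ag: "agree V M k A A'" and kM: "k \<in> M" and MV: "M \<subseteq> V"
  shows "tot V M A'"
  unfolding tot_def
proof (intro allI impI)
  fix u w assume r: "rel V M u w"
  have r2: "rel V M w u" using r by (rule rel_sym)
  have e1: "A' u w = mr k A u w" using ag r by (simp add: agree_def)
  have e2: "A' w u = mr k A w u" using ag r2 by (simp add: agree_def)
  have tt: "\<And>x y. rel V M x y \<Longrightarrow> A x y = (\<not> A y x)" using t by (simp add: tot_def)
  show "A' u w = (\<not> A' w u)"
  proof (cases "u = k \<or> w = k")
    case True
    then show ?thesis using e1 e2 tt[OF r2] by (auto simp: mr_def)
  next
    case False
    have r3: "rel V M u k" and r4: "rel V M w k" using r kM MV False by (auto simp: rel_def)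
    show ?thesis using e1 e2 tt[OF r] tt[OF r3] tt[OF r4] False by (auto simp: mr_def)
  qed
qed

lemma L_P2:
  assumes ag: "agree V M k A A'" and kM: "k \<in> M" and MV: "M \<subseteq> V"
  shows "P2 V M A' k"
  unfolding P2_def
proof (intro allI impI)
  fix u w assume h: "rel V M u w \<and> u \<noteq> k \<and> w \<noteq> k \<and> A' k u \<and> A' w k"
  have "rel V M k u" "rel V M w k" using h kM MV by (auto simp: rel_def)
  then have "A u k" "A k w" using h ag by (auto simp: agree_def mr_def)
  then show "A' u w" using h ag by (auto simp: agree_def mr_def)
qed

lemma fewfr_pair: "fewfr M a b c \<longleftrightarrow> (a \<in> M \<or> b \<in> M) \<and> (b \<in> M \<or> c \<in> M) \<and> (a \<in> M \<or> c \<in> M)"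
  by (simp add: fewfr_def)

lemma L_P3:
  assumes t: "tot V M A" and p2: "P2 V M A r" and p3: "P3 V M A r" and ag: "agree V M k A A'"
    and kM: "k \<in> M" and rM: "r \<in> M" and kr: "k \<noteq> r" and MV: "M \<subseteq> V"
  shows "P3 V M A' k"
  unfolding P3_def
proof (intro allI impI notI)
  fix a b c
  assume H: "a \<in> V \<and> b \<in> V \<and> c \<in> V \<and> distinct [a,b,c] \<and> a \<noteq> k \<and> b \<noteq> k \<and> c \<noteq> k \<and> fewfr M a b c"
    and cy: "A' a b \<and> A' b c \<and> A' c a"
  let ?S = "{a,b,c,k,r}"
  have SV: "?S \<subseteq> V" using H kM rM MV by auto
  have mf: "\<And>x y. x \<in> ?S \<Longrightarrow> y \<in> ?S \<Longrightarrow> x \<noteq> y \<Longrightarrow> x \<in> M \<or> y \<in> M"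
    using H kM rM by (auto simp: fewfr_def)
  have relS: "\<And>x y. x \<in> ?S \<Longrightarrow> y \<in> ?S \<Longrightarrow> x \<noteq> y \<Longrightarrow> rel V M x y"
    using mf SV by (auto simp: rel_def)
  have T: "\<And>x y. x \<in> ?S \<Longrightarrow> y \<in> ?S \<Longrightarrow> x \<noteq> y \<Longrightarrow> A x y = (\<not> A y x)"
    using relS t[unfolded tot_def] by blast
  have Q2: "\<And>x y. x \<in> ?S \<Longrightarrow> y \<in> ?S \<Longrightarrow> x \<noteq> y \<Longrightarrow> x \<noteq> r \<Longrightarrow> y \<noteq> r \<Longrightarrow> A r x \<Longrightarrow> A y r \<Longrightarrow> A x y"
    using relS p2[unfolded P2_def] by blast
  have Q3: "\<And>x y z. x \<in> ?S \<Longrightarrow> y \<in> ?S \<Longrightarrow> z \<in> ?S \<Longrightarrow> distinct [x,y,z] \<Longrightarrow> x \<noteq> r \<Longrightarrow> y \<noteq> r \<Longrightarrow> z \<noteq> r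
      \<Longrightarrow> \<not>(A x y \<and> A y z \<and> A z x)"
  proof -
    fix x y z assume xs: "x \<in> ?S" and ys: "y \<in> ?S" and zs: "z \<in> ?S" and dd: "distinct [x,y,z]"
      and xr: "x \<noteq> r" and yr: "y \<noteq> r" and zr: "z \<noteq> r"
    have "x \<noteq> y" "y \<noteq> z" "x \<noteq> z" using dd by auto
    then have "fewfr M x y z" unfolding fewfr_def using mf[OF xs ys] mf[OF ys zs] mf[OF xs zs] by blast
    moreover have "x \<in> V" "y \<in> V" "z \<in> V" using xs ys zs SV by blast+
    ultimately show "\<not>(A x y \<and> A y z \<and> A z x)" using p3[unfolded P3_def, rule_format, of x y z] dd xr yr zr by blast
  qed
  have ab: "rel V M a b" by (rule relS) (use H in auto)
  have bc: "rel V M b c" by (rule relS) (use H in auto)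
  have ca: "rel V M c a" by (rule relS) (use H in auto)
  have m: "mr k A a b" "mr k A b c" "mr k A c a"
    using cy ag[unfolded agree_def, rule_format, OF ab] ag[unfolded agree_def, rule_format, OF bc]
      ag[unfolded agree_def, rule_format, OF ca] by auto
  show False
  proof (cases "r = a \<or> r = b \<or> r = c")
    case False
    have "\<not>(mr k A a b \<and> mr k A b c \<and> mr k A c a)"
      apply (rule P3_core_out[of a b c k r A])
      subgoal using H False kr by auto
      subgoal for x y by (rule T) auto
      subgoal for x y by (rule Q2) (use H False kr in auto)
      subgoal for x y z by (rule Q3) (use H False kr in auto)
      done
    then show False using m by blast
  next
    case True
    then consider "r = a" | "r = b" | "r = c" by blast
    then show False
    proof cases
      case 1
      have "\<not>(mr k A a b \<and> mr k A b c \<and> mr k A c a)"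
        apply (rule P3_core_in[of a b c k A])
        subgoal using H 1 kr by auto
        subgoal for x y by (rule T) (use 1 in auto)
        subgoal for x y by (rule Q2) (use H 1 kr in auto)
        subgoal for x y z by (rule Q3) (use H 1 kr in auto)
        done
      then show False using m by blast
    next
      case 2
      have "\<not>(mr k A b c \<and> mr k A c a \<and> mr k A a b)"
        apply (rule P3_core_in[of b c a k A])
        subgoal using H 2 kr by auto
        subgoal for x y by (rule T) (use 2 in auto)
        subgoal for x y by (rule Q2) (use H 2 kr in auto)
        subgoal for x y z by (rule Q3) (use H 2 kr in auto)
        done
      then show False using m by blast
    next
      case 3
      have "\<not>(mr k A c a \<and> mr k A a b \<and> mr k A b c)"
        apply (rule P3_core_in[of c a b k A])
        subgoal using H 3 kr by auto
        subgoal for x y by (rule T) (use 3 in auto)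
        subgoal for x y by (rule Q2) (use H 3 kr in auto)
        subgoal for x y z by (rule Q3) (use H 3 kr in auto)
        done
      then show False using m by blast
    qed
  qed
qed

lemma L_Bet:
  assumes t: "tot V M A" and p2: "P2 V M A r" and p3: "P3 V M A r" and ag: "agree V M k A A'"
    and kM: "k \<in> M" and rM: "r \<in> M" and kr: "k \<noteq> r" and MV: "M \<subseteq> V"
    and fV: "f \<in> V" "f \<notin> M" and gV: "g \<in> V" "g \<notin> M" and fg: "f \<noteq> g" and vM: "v \<in> M"
    and h: "A' f v" "A' v g"
  shows "v \<noteq> r \<and> ((A f v \<and> A v g) \<or> (A g v \<and> A v f))"
proof -
  let ?S = "{f,g,k,r,v}"
  have SV: "?S \<subseteq> V" using fV gV kM rM vM MV by auto
  have mf: "\<And>x y. x \<in> ?S \<Longrightarrow> y \<in> ?S \<Longrightarrow> x \<noteq> y \<Longrightarrow> {x,y} \<noteq> {f,g} \<Longrightarrow> x \<in> M \<or> y \<in> M"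
    using kM rM vM by (auto simp: doubleton_eq_iff)
  have relS: "\<And>x y. x \<in> ?S \<Longrightarrow> y \<in> ?S \<Longrightarrow> x \<noteq> y \<Longrightarrow> {x,y} \<noteq> {f,g} \<Longrightarrow> rel V M x y"
  proof -
    fix x y assume a: "x \<in> ?S" "y \<in> ?S" "x \<noteq> y" "{x,y} \<noteq> {f,g}"
    show "rel V M x y" unfolding rel_def using mf[OF a] a SV by blast
  qed
  have T: "\<And>x y. x \<in> ?S \<Longrightarrow> y \<in> ?S \<Longrightarrow> x \<noteq> y \<Longrightarrow> {x,y} \<noteq> {f,g} \<Longrightarrow> A x y = (\<not> A y x)"
    using relS t[unfolded tot_def] by blast
  have Q2: "\<And>x y. x \<in> ?S \<Longrightarrow> y \<in> ?S \<Longrightarrow> x \<noteq> y \<Longrightarrow> {x,y} \<noteq> {f,g} \<Longrightarrow> x \<noteq> r \<Longrightarrow> y \<noteq> r \<Longrightarrow> A r x \<Longrightarrow> A y r \<Longrightarrow> A x y"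
    using relS p2[unfolded P2_def] by blast
  have Q3: "\<And>x y z. x \<in> ?S \<Longrightarrow> y \<in> ?S \<Longrightarrow> z \<in> ?S \<Longrightarrow> distinct [x,y,z] \<Longrightarrow> \<not>({f,g} \<subseteq> {x,y,z}) \<Longrightarrow> x \<noteq> r \<Longrightarrow> y \<noteq> r \<Longrightarrow> z \<noteq> r
      \<Longrightarrow> \<not>(A x y \<and> A y z \<and> A z x)"
  proof -
    fix x y z assume xs: "x \<in> ?S" and ys: "y \<in> ?S" and zs: "z \<in> ?S" and dd: "distinct [x,y,z]"
      and nfg: "\<not>({f,g} \<subseteq> {x,y,z})" and xr: "x \<noteq> r" and yr: "y \<noteq> r" and zr: "z \<noteq> r"
    have n1: "{x,y} \<noteq> {f,g}" "{y,z} \<noteq> {f,g}" "{x,z} \<noteq> {f,g}" using nfg by auto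
    have "x \<noteq> y" "y \<noteq> z" "x \<noteq> z" using dd by auto
    then have "fewfr M x y z" unfolding fewfr_def using mf[OF xs ys] mf[OF ys zs] mf[OF xs zs] n1 by blast
    moreover have "x \<in> V" "y \<in> V" "z \<in> V" using xs ys zs SV by blast+
    ultimately show "\<not>(A x y \<and> A y z \<and> A z x)" using p3[unfolded P3_def, rule_format, of x y z] dd xr yr zr by blast
  qed
  have fv: "rel V M f v" by (rule relS) (use fV gV vM in \<open>auto simp: doubleton_eq_iff\<close>)
  have vg: "rel V M v g" by (rule relS) (use fV gV vM in \<open>auto simp: doubleton_eq_iff\<close>)
  have m: "mr k A f v \<and> mr k A v g"
    using h ag[unfolded agree_def, rule_format, OF fv] ag[unfolded agree_def, rule_format, OF vg] by auto
  have fk: "f \<noteq> k" "f \<noteq> r" "g \<noteq> k" "g \<noteq> r" "f \<noteq> v" "g \<noteq> v" using fV gV kM rM vM by auto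
  consider "v = k" | "v = r" | "v \<noteq> k \<and> v \<noteq> r" by blast
  then show ?thesis
  proof cases
    case 1
    have "mr k A f k \<and> mr k A k g \<longrightarrow> k \<noteq> r \<and> ((A f k \<and> A k g) \<or> (A g k \<and> A k f))"
      apply (rule Bet_core_k[of f g k r A])
      subgoal using fk fg kr by auto
      subgoal for x y by (rule T) (use 1 fk fg kr in \<open>auto simp: doubleton_eq_iff\<close>)
      subgoal for x y by (rule Q2) (use 1 fk fg kr in \<open>auto simp: doubleton_eq_iff\<close>)
      subgoal for x y z by (rule Q3) (use 1 fk fg kr in \<open>auto simp: doubleton_eq_iff\<close>)
      done
    then show ?thesis using m 1 by blast
  next
    case 2
    have "mr k A f r \<and> mr k A r g \<longrightarrow> r \<noteq> r \<and> ((A f r \<and> A r g) \<or> (A g r \<and> A r f))"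
      apply (rule Bet_core_r[of f g k r A])
      subgoal using fk fg kr by auto
      subgoal for x y by (rule T) (use 2 fk fg kr in \<open>auto simp: doubleton_eq_iff\<close>)
      subgoal for x y by (rule Q2) (use 2 fk fg kr in \<open>auto simp: doubleton_eq_iff\<close>)
      subgoal for x y z by (rule Q3) (use 2 fk fg kr in \<open>auto simp: doubleton_eq_iff\<close>)
      done
    then show ?thesis using m 2 by blast
  next
    case 3
    have "mr k A f v \<and> mr k A v g \<longrightarrow> v \<noteq> r \<and> ((A f v \<and> A v g) \<or> (A g v \<and> A v f))"
      apply (rule Bet_core_v[of f g k r v A])
      subgoal using fk fg kr 3 by auto
      subgoal for x y by (rule T) (use 3 fk fg kr in \<open>auto simp: doubleton_eq_iff\<close>)
      subgoal for x y by (rule Q2) (use 3 fk fg kr in \<open>auto simp: doubleton_eq_iff\<close>)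
      subgoal for x y z by (rule Q3) (use 3 fk fg kr in \<open>auto simp: doubleton_eq_iff\<close>)
      done
    then show ?thesis using m by blast
  qed
qed

lemma L_init:
  assumes t: "tot V M A" and ag: "agree V M k A A'" and kM: "k \<in> M" and MV: "M \<subseteq> V"
    and NV: "\<forall>a b c. a \<in> V \<and> b \<in> V \<and> c \<in> V \<and> distinct [k,a,b,c] \<and> fewfr M a b c
       \<and> ((\<forall>x\<in>{a,b,c}. \<not> A x k) \<or> (\<forall>x\<in>{a,b,c}. \<not> A k x)) \<longrightarrow> \<not>(A a b \<and> A b c \<and> A c a)"
  shows "P3 V M A' k"
  unfolding P3_def
proof (intro allI impI notI)
  fix a b c
  assume H: "a \<in> V \<and> b \<in> V \<and> c \<in> V \<and> distinct [a,b,c] \<and> a \<noteq> k \<and> b \<noteq> k \<and> c \<noteq> k \<and> fewfr M a b c"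
    and cy: "A' a b \<and> A' b c \<and> A' c a"
  let ?S = "{a,b,c,k}"
  have SV: "?S \<subseteq> V" using H kM MV by auto
  have mf: "\<And>x y. x \<in> ?S \<Longrightarrow> y \<in> ?S \<Longrightarrow> x \<noteq> y \<Longrightarrow> x \<in> M \<or> y \<in> M"
    using H kM by (auto simp: fewfr_def)
  have relS: "\<And>x y. x \<in> ?S \<Longrightarrow> y \<in> ?S \<Longrightarrow> x \<noteq> y \<Longrightarrow> rel V M x y"
    using mf SV by (auto simp: rel_def)
  have T: "\<And>x y. x \<in> ?S \<Longrightarrow> y \<in> ?S \<Longrightarrow> x \<noteq> y \<Longrightarrow> A x y = (\<not> A y x)"
    using relS t[unfolded tot_def] by blast
  have ab: "rel V M a b" by (rule relS) (use H in auto)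
  have bc: "rel V M b c" by (rule relS) (use H in auto)
  have ca: "rel V M c a" by (rule relS) (use H in auto)
  have m: "mr k A a b" "mr k A b c" "mr k A c a"
    using cy ag[unfolded agree_def, rule_format, OF ab] ag[unfolded agree_def, rule_format, OF bc]
      ag[unfolded agree_def, rule_format, OF ca] by auto
  have nv: "\<not>(((\<not>A a k \<and> \<not>A b k \<and> \<not>A c k) \<or> (\<not>A k a \<and> \<not>A k b \<and> \<not>A k c)) \<and> (A a b \<and> A b c \<and> A c a))"
    using NV[rule_format, of a b c] H by auto
  have "\<not>(mr k A a b \<and> mr k A b c \<and> mr k A c a)"
    apply (rule Init_core[of a b c k A])
    subgoal using H by auto
    subgoal for x y by (rule T) auto
    subgoal using nv .
    done
  then show False using m by blast
qed

lemma quiver_mutate: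
  assumes q: "quiver V M B"
  shows "quiver V M (mutate k B)"
proof -
  have anti: "\<And>x y. B x y = - B y x" using q unfolding quiver_def by blast
  have zero: "\<And>x y. x \<notin> V \<or> y \<notin> V \<Longrightarrow> B x y = 0" using q unfolding quiver_def by blast
  have A1: "mutate k B i l = - mutate k B l i" for i l
  proof (cases "i = k \<or> l = k")
    case True
    then show ?thesis using anti[of i l] by (auto simp: mutate_def)
  next
    case False
    have a1: "B l i = - B i l" by (rule anti)
    have a2: "B l k = - B k l" by (rule anti)
    have a3: "B k i = - B i k" by (rule anti)
    have "mutate k B l i = B l i + max (B l k) 0 * max (B k i) 0 - max (- B l k) 0 * max (- B k i) 0"
      using False by (simp add: mutate_def)
    also have "\<dots> = - B i l + max (- B k l) 0 * max (- B i k) 0 - max (B k l) 0 * max (B i k) 0"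
      using a1 a2 a3 by simp
    also have "\<dots> = - mutate k B i l" using False by (simp add: mutate_def mult.commute)
    finally show ?thesis by simp
  qed
  have A2: "mutate k B i l = 0" if "i \<notin> V \<or> l \<notin> V" for i l
  proof (cases "i = k \<or> l = k")
    case True
    then show ?thesis using zero[OF that] by (auto simp: mutate_def)
  next
    case False
    then show ?thesis using that zero[of i l] zero[of i k] zero[of k l] by (auto simp: mutate_def)
  qed
  show ?thesis using q A1 A2 unfolding quiver_def by blast
qed

lemma card3:
  assumes "distinct [u,k,w]" "k \<in> M" "u \<in> M \<or> w \<in> M"
  shows "card ({u,k,w} - M) \<le> 1"
proof (cases "u \<in> M")
  case True
  have "{u,k,w} - M \<subseteq> {w}" using True assms by auto
  then have "card ({u,k,w} - M) \<le> card {w}" by (intro card_mono) auto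
  then show ?thesis by simp
next
  case False
  then have "w \<in> M" using assms by auto
  then have "{u,k,w} - M \<subseteq> {u}" using assms by auto
  then have "card ({u,k,w} - M) \<le> card {u}" by (intro card_mono) auto
  then show ?thesis by simp
qed

lemma card_vortex:
  assumes d: "distinct [k,a,b,c]" and kM: "k \<in> M" and ff: "fewfr M a b c"
  shows "3 \<le> card ({k,a,b,c} \<inter> M)"
proof -
  obtain x y where xy: "x \<in> {a,b,c}" "y \<in> {a,b,c}" "x \<noteq> y" "x \<in> M" "y \<in> M"
    using ff d unfolding fewfr_def by auto
  have "{k,x,y} \<subseteq> {k,a,b,c} \<inter> M" using xy kM by auto
  then have "card {k,x,y} \<le> card ({k,a,b,c} \<inter> M)" by (intro card_mono) auto
  moreover have "card {k,x,y} = 3" using xy d by auto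
  ultimately show ?thesis by simp
qed

lemma tot_iff:
  assumes q: "quiver V M B"
  shows "complete_quiver V M B = tot V M (\<lambda>x y. 0 < B x y)"
proof -
  have anti: "\<And>x y. B x y = - B y x" using q unfolding quiver_def by blast
  have e1: "complete_quiver V M B = (\<forall>u w. rel V M u w \<longrightarrow> B u w \<noteq> 0)"
    by (auto simp: complete_quiver_def rel_def)
  have e2: "(B u w \<noteq> 0) = ((0 < B u w) = (\<not> 0 < B w u))" for u w
    using anti[of w u] by auto
  show ?thesis using e1 e2 by (simp add: tot_def)
qed

lemma maxprod: "max (a::int) 0 * max b 0 = (if a > 0 \<and> b > 0 then a * b else 0)"
  by (auto simp: max_def)

lemma conn:
  assumes q: "quiver V M B" and c: "complete_quiver V M B" and cp: "cycle_preserving V M B k"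
    and r: "rel V M u w"
  shows "(0 < mutate k B u w) = mr k (\<lambda>x y. 0 < B x y) u w"
proof -
  have kM: "k \<in> M" using cp by (simp add: cycle_preserving_def)
  have anti: "\<And>x y. B x y = - B y x" using q unfolding quiver_def by blast
  have MV: "M \<subseteq> V" using q unfolding quiver_def by blast
  have anti': "\<And>x y. mutate k B x y = - mutate k B y x"
    using quiver_mutate[OF q, of k] unfolding quiver_def by blast
  have uV: "u \<in> V" and wV: "w \<in> V" and uw: "u \<noteq> w" and um: "u \<in> M \<or> w \<in> M" using r by (auto simp: rel_def)
  show ?thesis
  proof (cases "u = k \<or> w = k")
    case True
    have "B w u = - B u w" by (rule anti)
    then show ?thesis using True by (auto simp: mutate_def mr_def)
  next
    case False
    then have uk: "u \<noteq> k" and wk: "w \<noteq> k" by auto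
    have kV: "k \<in> V" using kM MV by auto
    have ruk: "B u k \<noteq> 0" using c uV kV uk kM by (auto simp: complete_quiver_def)
    have rkw: "B k w \<noteq> 0" using c wV kV wk kM by (auto simp: complete_quiver_def)
    have ruw: "B u w \<noteq> 0" using c uV wV uw um by (auto simp: complete_quiver_def)
    have mdef: "mutate k B u w = B u w + (if B u k > 0 \<and> B k w > 0 then B u k * B k w else 0)
        - (if - B u k > 0 \<and> - B k w > 0 then (- B u k) * (- B k w) else 0)"
      using uk wk by (simp add: mutate_def maxprod)
    have o3: "cyclic3 (mutate k B) u k w" if cy: "cyclic3 B u k w"
    proof -
      have "oriented_3cycle V M B u k w"
        unfolding oriented_3cycle_def using uV kV wV uk wk uw card3[of u k w M] kM um cy by auto
      then have "oriented_3cycle V M (mutate k B) u k w" using cp by (simp add: cycle_preserving_def)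
      then show ?thesis by (simp add: oriented_3cycle_def)
    qed
    have mk1: "mutate k B u k = - B u k" "mutate k B k w = - B k w" "mutate k B k u = - B k u"
      "mutate k B w k = - B w k" by (auto simp: mutate_def)
    have a1: "B w k = - B k w" "B k u = - B u k" "B w u = - B u w" by (rule anti)+
    consider (pp) "B u k > 0 \<and> B k w > 0" | (nn) "B u k < 0 \<and> B k w < 0"
      | (oth) "\<not>(B u k > 0 \<and> B k w > 0) \<and> \<not>(B u k < 0 \<and> B k w < 0)" by linarith
    then show ?thesis
    proof cases
      case pp
      have mr1: "mr k (\<lambda>x y. 0 < B x y) u w" using pp uk wk by (simp add: mr_def)
      have "0 < mutate k B u w"
      proof (cases "B u w > 0")
        case True
        have p: "B u k * B k w > 0" using pp by simp
        have "mutate k B u w = B u w + B u k * B k w" using mdef pp by simp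
        then show ?thesis using p True by linarith
      next
        case False
        then have "B w u > 0" using ruw a1 by simp
        then have "cyclic3 B u k w" using pp by (simp add: cyclic3_def)
        then have "cyclic3 (mutate k B) u k w" by (rule o3)
        then show ?thesis using mk1 pp by (auto simp: cyclic3_def)
      qed
      then show ?thesis using mr1 by simp
    next
      case nn
      have mr1: "\<not> mr k (\<lambda>x y. 0 < B x y) u w" using nn uk wk a1 by (simp add: mr_def)
      have "\<not> 0 < mutate k B u w"
      proof (cases "B u w > 0")
        case False
        then have "B u w < 0" using ruw by simp
        moreover have p: "(- B u k) * (- B k w) > 0" using nn by (simp only: zero_less_mult_iff) simp
        moreover have "mutate k B u w = B u w - (- B u k) * (- B k w)" using mdef nn by simp
        ultimately show ?thesis by linarith
      next
        case True
        then have "cyclic3 B u k w" using nn a1 by (simp add: cyclic3_def)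
        then have "cyclic3 (mutate k B) u k w" by (rule o3)
        then have "mutate k B w u > 0" using mk1 nn a1 by (auto simp: cyclic3_def)
        then show ?thesis using anti'[of u w] by simp
      qed
      then show ?thesis using mr1 by simp
    next
      case oth
      have "mutate k B u w = B u w" using mdef oth by auto
      moreover have "mr k (\<lambda>x y. 0 < B x y) u w = (0 < B u w)" using oth uk wk a1 by (auto simp: mr_def)
      ultimately show ?thesis by simp
    qed
  qed
qed

theorem mainTheorem14:
  fixes V M :: "'v set" and B :: "'v \<Rightarrow> 'v \<Rightarrow> int" and m :: "nat \<Rightarrow> 'v"
  assumes "quiver V M B"
    and "complete_quiver V M B"
    and "V - M \<noteq> {}"
    and "\<forall>l. m l \<in> M"
    and "\<forall>l. m l \<noteq> m (Suc l)"
    and "\<forall>v\<in>M. infinite {l. m l = v}"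
    and "\<forall>l. cycle_preserving V M (mutseq B m l) (m l)"
    and "\<not> vortex_apex V M B (m 0)"
  shows "\<exists>T. \<forall>j>T. sign_coherent V M (mutseq B m j)"
proof -
  note q0 = assms(1) and c0 = assms(2) and fr = assms(3) and mM = assms(4) and red = assms(5)
    and wb = assms(6) and cp = assms(7) and nv = assms(8)
  define Bt where "Bt = mutseq B m"
  define A where "A t = (\<lambda>x y. 0 < Bt t x y)" for t
  have MV: "M \<subseteq> V" and finV: "finite V" using q0 unfolding quiver_def by blast+
  have finM: "finite M" using MV finV finite_subset by blast
  have BtS: "Bt (Suc t) = mutate (m t) (Bt t)" for t by (simp add: Bt_def)
  have Bt0: "Bt 0 = B" by (simp add: Bt_def)
  have Q: "quiver V M (Bt t)" for t
    by (induction t) (simp_all add: Bt0 BtS q0 quiver_mutate)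
  have cpt: "cycle_preserving V M (Bt t) (m t)" for t using cp by (simp add: Bt_def)
  have AG: "agree V M (m t) (A t) (A (Suc t))" if "complete_quiver V M (Bt t)" for t
    unfolding agree_def A_def BtS using conn[OF Q that cpt] by blast
  have C: "complete_quiver V M (Bt t)" for t
  proof (induction t)
    case 0 then show ?case using c0 Bt0 by simp
  next
    case (Suc t)
    have "tot V M (A t)" using Suc tot_iff[OF Q] unfolding A_def by blast
    then have "tot V M (A (Suc t))" using L_tot[OF _ AG[OF Suc]] mM MV by blast
    then show ?case using tot_iff[OF Q] unfolding A_def by blast
  qed
  have TOT: "tot V M (A t)" for t using C tot_iff[OF Q] unfolding A_def by blast
  have AGt: "agree V M (m t) (A t) (A (Suc t))" for t using AG C by blast
  have NV: "\<forall>a b c. a \<in> V \<and> b \<in> V \<and> c \<in> V \<and> distinct [m 0,a,b,c] \<and> fewfr M a b c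
       \<and> ((\<forall>x\<in>{a,b,c}. \<not> A 0 x (m 0)) \<or> (\<forall>x\<in>{a,b,c}. \<not> A 0 (m 0) x)) \<longrightarrow> \<not>(A 0 a b \<and> A 0 b c \<and> A 0 c a)"
  proof (intro allI impI notI)
    fix a b c
    assume h: "a \<in> V \<and> b \<in> V \<and> c \<in> V \<and> distinct [m 0,a,b,c] \<and> fewfr M a b c
       \<and> ((\<forall>x\<in>{a,b,c}. \<not> A 0 x (m 0)) \<or> (\<forall>x\<in>{a,b,c}. \<not> A 0 (m 0) x))"
      and cy: "A 0 a b \<and> A 0 b c \<and> A 0 c a"
    have m0V: "m 0 \<in> V" using mM MV by blast
    have cd: "3 \<le> card ({m 0,a,b,c} \<inter> M)" using card_vortex[of "m 0" a b c M] h mM by blast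
    have sd: "(\<forall>x\<in>{a,b,c}. B x (m 0) \<le> 0) \<or> (\<forall>x\<in>{a,b,c}. B (m 0) x \<le> 0)"
      using h unfolding A_def Bt0 by (auto simp: not_less)
    have "cyclic3 B a b c" using cy unfolding A_def Bt0 cyclic3_def by blast
    then have "vortex_apex V M B (m 0)" unfolding vortex_apex_def using h m0V cd sd by blast
    then show False using nv by blast
  qed
  have INV: "P2 V M (A (Suc t)) (m t) \<and> P3 V M (A (Suc t)) (m t)" for t
  proof (induction t)
    case 0
    have "P2 V M (A (Suc 0)) (m 0)" using L_P2[OF AGt[of 0]] mM MV by blast
    moreover have "P3 V M (A (Suc 0)) (m 0)" using L_init[OF TOT AGt[of 0] _ MV NV] mM by blast
    ultimately show ?case by blast
  next
    case (Suc t)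
    have "P2 V M (A (Suc (Suc t))) (m (Suc t))" using L_P2[OF AGt[of "Suc t"]] mM MV by blast
    moreover have "P3 V M (A (Suc (Suc t))) (m (Suc t))"
      using L_P3[OF TOT _ _ AGt[of "Suc t"] _ _ _ MV] Suc mM red by metis
    ultimately show ?case by blast
  qed
  define bet where "bet t f g v \<longleftrightarrow> (A t f v \<and> A t v g) \<or> (A t g v \<and> A t v f)" for t f g v
  have STEP: "v \<noteq> m t \<and> bet (Suc t) f g v"
    if f: "f \<in> V" "f \<notin> M" and g: "g \<in> V" "g \<notin> M" and fg: "f \<noteq> g" and v: "v \<in> M"
      and b: "bet (Suc (Suc t)) f g v" for t f g v
  proof -
    have i2: "P2 V M (A (Suc t)) (m t)" and i3: "P3 V M (A (Suc t)) (m t)" using INV by blast+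
    have ne: "m (Suc t) \<noteq> m t" using red by metis
    note L = L_Bet[OF TOT i2 i3 AGt[of "Suc t"] mM[rule_format] mM[rule_format] ne MV]
    from b show ?thesis unfolding bet_def
    proof
      assume "A (Suc (Suc t)) f v \<and> A (Suc (Suc t)) v g"
      then show "v \<noteq> m t \<and> ((A (Suc t) f v \<and> A (Suc t) v g) \<or> (A (Suc t) g v \<and> A (Suc t) v f))"
        using L[OF f g fg v] by blast
    next
      assume "A (Suc (Suc t)) g v \<and> A (Suc (Suc t)) v f"
      then show "v \<noteq> m t \<and> ((A (Suc t) f v \<and> A (Suc t) v g) \<or> (A (Suc t) g v \<and> A (Suc t) v f))"
        using L[OF g f _ v] fg by blast
    qed
  qed
  have EV: "\<exists>s. \<forall>t\<ge>s. \<forall>f g. f \<in> V - M \<longrightarrow> g \<in> V - M \<longrightarrow> f \<noteq> g \<longrightarrow> \<not> bet t f g v" if vM: "v \<in> M" for v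
  proof -
    have "{l. m l = v} \<noteq> {}" using wb vM by (metis finite.emptyI)
    then obtain s0 where s0: "m s0 = v" by blast
    have D: "\<forall>f g. f \<in> V - M \<longrightarrow> g \<in> V - M \<longrightarrow> f \<noteq> g \<longrightarrow> \<not> bet (Suc (Suc (s0 + d))) f g v" for d
    proof (induction d)
      case 0
      show ?case using STEP[of _ _ v s0] s0 vM by auto
    next
      case (Suc d)
      show ?case
      proof (intro allI impI)
        fix f g assume "f \<in> V - M" "g \<in> V - M" "f \<noteq> g"
        then show "\<not> bet (Suc (Suc (s0 + Suc d))) f g v"
          using STEP[of f g v "Suc (s0 + d)"] Suc vM by auto
      qed
    qed
    show ?thesis
    proof (intro exI[of _ "Suc (Suc s0)"] allI impI)
      fix t f g assume "Suc (Suc s0) \<le> t" "f \<in> V - M" "g \<in> V - M" "f \<noteq> g"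
      moreover have "t = Suc (Suc (s0 + (t - Suc (Suc s0))))" using calculation(1) by simp
      ultimately show "\<not> bet t f g v" using D[of "t - Suc (Suc s0)"] by metis
    qed
  qed
  have "\<forall>v\<in>M. eventually (\<lambda>t. \<forall>f g. f \<in> V - M \<longrightarrow> g \<in> V - M \<longrightarrow> f \<noteq> g \<longrightarrow> \<not> bet t f g v) sequentially"
    using EV unfolding eventually_sequentially by blast
  then have "eventually (\<lambda>t. \<forall>v\<in>M. \<forall>f g. f \<in> V - M \<longrightarrow> g \<in> V - M \<longrightarrow> f \<noteq> g \<longrightarrow> \<not> bet t f g v) sequentially"
    by (rule eventually_ball_finite[OF finM])
  then obtain T where HT: "\<And>t. t \<ge> T \<Longrightarrow> \<forall>v\<in>M. \<forall>f g. f \<in> V - M \<longrightarrow> g \<in> V - M \<longrightarrow> f \<noteq> g \<longrightarrow> \<not> bet t f g v"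
    unfolding eventually_sequentially by blast
  show ?thesis
  proof (intro exI[of _ T] allI impI)
    fix j assume jT: "T < j"
    have anti: "\<And>x y. Bt j x y = - Bt j y x" using Q[of j] unfolding quiver_def by blast
    show "sign_coherent V M (mutseq B m j)"
      unfolding sign_coherent_def Bt_def[symmetric]
    proof
      fix v assume vM: "v \<in> M"
      obtain f0 where f0: "f0 \<in> V - M" using fr by blast
      have vV: "v \<in> V" using vM MV by blast
      have nz: "Bt j v f0 \<noteq> 0" using C[of j, unfolded complete_quiver_def, rule_format, of v f0] f0 vV vM by auto
      show "red V M (Bt j) v \<or> green V M (Bt j) v"
      proof (rule ccontr)
        assume nrg: "\<not> (red V M (Bt j) v \<or> green V M (Bt j) v)"
        then obtain f where f: "f \<in> V - M" "\<not> 0 \<le> Bt j f v" unfolding red_def using vM nz f0 by blast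
        from nrg obtain g where g: "g \<in> V - M" "\<not> 0 \<le> Bt j v g" unfolding green_def using vM nz f0 by blast
        have a1: "A j v f" using f(2) anti[of f v] unfolding A_def by simp
        have a2: "A j g v" using g(2) anti[of g v] unfolding A_def by simp
        have fg: "f \<noteq> g" using f(2) g(2) anti[of f v] by auto
        have "bet j f g v" unfolding bet_def using a1 a2 by blast
        then show False using HT[of j] jT vM f(1) g(1) fg by auto
      qed
    qed
  qed
qed

end
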